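(* Let $G:[0,\infty)\to\mathbb{C}$ be continuous, let $H_S^{(0)},H_S^{(2)}$ be Hermitian $N\times N$ matrices, $\lambda>0$, and let $W_\lambda(t)=V_\lambda(\lambda^{-2}t)$, where $V_\lambda$ is the $N\times N$ matrix-valued solution of $$\frac{d}{dt}V_\lambda(t)=-\lambda^2\int_0^t ds\,G(t-s)\,e^{i(H_S^{(0)}+\lambda^2H_S^{(2)})(t-s)}V_\lambda(s),\qquad V_\lambda(0)=I.$$ Define the Laplace transforms $\tilde W_\lambda(p)=\int_0^\infty e^{-pt}W_\lambda(t)\,dt$ and $\tilde G(p)=\int_0^\infty e^{-pt}G(t)\,dt$. Then (for $p$ at which the Laplace integrals involved converge) $$\tilde W_\lambda(p)=\Big(p+\tilde G\big(-iH_S^{(0)}+\lambda^2(p-iH_S^{(2)})\big)\Big)^{-1}.$$ Here the matrix function is defined through the Hermitian matrix $H_S=H_S^{(0)}+\lambda^2H_S^{(2)}$: if $H_S=U\,\mathrm{diag}\{E_\alpha\}U^\dagger$ with $U$ unitary, then $$\Big(p+\tilde G(-iH_S+\lambda^2p)\Big)^{-1}=U\,\mathrm{diag}\Big\{\frac{1}{p+\tilde G(-iE_\alpha+\lambda^2p)}\Big\}U^\dagger.$$ *)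

theory Defs
  imports "HOL-Analysis.Analysis"
begin

definition cscale :: "complex \<Rightarrow> complex^'n^'m \<Rightarrow> complex^'n^'m" where
  "cscale c A = (\<chi> i j. c * A $ i $ j)"

definition adjoint_mat :: "complex^'n^'m \<Rightarrow> complex^'m^'n" where
  "adjoint_mat A = (\<chi> i j. cnj (A $ j $ i))"

definition hermitian_mat :: "complex^'n^'n \<Rightarrow> bool" where
  "hermitian_mat A \<longleftrightarrow> adjoint_mat A = A"

definition unitary_mat :: "complex^'n^'n \<Rightarrow> bool" where
  "unitary_mat U \<longleftrightarrow> adjoint_mat U ** U = mat 1 \<and> U ** adjoint_mat U = mat 1"

definition diag_mat :: "('n \<Rightarrow> complex) \<Rightarrow> complex^'n^'n" where
  "diag_mat d = (\<chi> i j. if i = j then d i else 0)"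

definition mat_pow :: "complex^'n^'n \<Rightarrow> nat \<Rightarrow> complex^'n^'n" where
  "mat_pow A k = ((\<lambda>B. A ** B) ^^ k) (mat 1)"

definition mat_exp :: "complex^'n^'n \<Rightarrow> complex^'n^'n" where
  "mat_exp A = (\<Sum>k. (1 / fact k) *\<^sub>R mat_pow A k)"

definition laplace :: "(real \<Rightarrow> complex) \<Rightarrow> complex \<Rightarrow> complex" where
  "laplace f z = integral {0..} (\<lambda>t. exp (- (z * of_real t)) * f t)"

definition laplace_mat :: "(real \<Rightarrow> complex^'n^'n) \<Rightarrow> complex \<Rightarrow> complex^'n^'n" where
  "laplace_mat F z = integral {0..} (\<lambda>t. cscale (exp (- (z * of_real t))) (F t))"

end

theory Submission
  imports Defs
begin


lemma conv_lborel:
  fixes f g :: "real \<Rightarrow> complex"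
  assumes fm[measurable]: "f \<in> borel_measurable lborel" and gm[measurable]: "g \<in> borel_measurable lborel"
  and fi: "integrable lborel f" and gi: "integrable lborel g"
  shows "integrable lborel (\<lambda>t. \<integral>s. g (t - s) * f s \<partial>lborel)"
   and "(\<integral>t. (\<integral>s. g (t - s) * f s \<partial>lborel) \<partial>lborel) = (\<integral>x. g x \<partial>lborel) * (\<integral>x. f x \<partial>lborel)"
proof -
  have P: "pair_sigma_finite lborel lborel"
    by (simp add: pair_sigma_finite_def lborel.sigma_finite_measure_axioms)
  have tr: "integrable lborel (\<lambda>t. h (t - s))" if "integrable lborel h" for h :: "real \<Rightarrow> 'z::{banach, second_countable_topology}" and s
    using lborel_integrable_real_affine[OF that, of 1 "-s"] by simp
  have tri: "(\<integral>t. h (t - s) \<partial>lborel) = (\<integral>t. h t \<partial>lborel)" for h :: "real \<Rightarrow> 'z::{banach, second_countable_topology}" and s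
    using lborel_integral_real_affine[of 1 h "-s"] by simp
  have meas: "(\<lambda>(s, t). g (t - s) * f s) \<in> borel_measurable (lborel \<Otimes>\<^sub>M lborel)"
    by measurable
  have int2: "integrable (lborel \<Otimes>\<^sub>M lborel) (\<lambda>(s, t). g (t - s) * f s)"
  proof (rule pair_sigma_finite.Fubini_integrable[OF P meas])
    have "(\<lambda>s. \<integral>t. norm (case (s, t) of (s, t) \<Rightarrow> g (t - s) * f s) \<partial>lborel)
        = (\<lambda>s. norm (f s) * (\<integral>t. norm (g t) \<partial>lborel))"
    proof
      fix s
      have "(\<integral>t. norm (case (s, t) of (s, t) \<Rightarrow> g (t - s) * f s) \<partial>lborel)
          = (\<integral>t. norm (g (t - s)) * norm (f s) \<partial>lborel)" by (simp add: norm_mult)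
      also have "\<dots> = (\<integral>t. norm (g (t - s)) \<partial>lborel) * norm (f s)" by simp
      also have "\<dots> = (\<integral>t. norm (g t) \<partial>lborel) * norm (f s)"
        using tri[of "\<lambda>t. norm (g t)" s] by simp
      finally show "(\<integral>t. norm (case (s, t) of (s, t) \<Rightarrow> g (t - s) * f s) \<partial>lborel)
        = norm (f s) * (\<integral>t. norm (g t) \<partial>lborel)" by simp
    qed
    then show "integrable lborel (\<lambda>s. \<integral>t. norm (case (s, t) of (s, t) \<Rightarrow> g (t - s) * f s) \<partial>lborel)"
      using fi by (simp add: integrable_norm)
    show "AE s in lborel. integrable lborel (\<lambda>t. case (s, t) of (s, t) \<Rightarrow> g (t - s) * f s)"
      using tr[OF gi] by simp
  qed
  have int2': "integrable (lborel \<Otimes>\<^sub>M lborel) (case_prod (\<lambda>s t. g (t - s) * f s))"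
    using int2 by simp
  show "integrable lborel (\<lambda>t. \<integral>s. g (t - s) * f s \<partial>lborel)"
    using pair_sigma_finite.integrable_snd[OF P int2'] by simp
  have "(\<integral>t. (\<integral>s. g (t - s) * f s \<partial>lborel) \<partial>lborel) = (\<integral>s. (\<integral>t. g (t - s) * f s \<partial>lborel) \<partial>lborel)"
    using pair_sigma_finite.Fubini_integral[OF P int2'] by simp
  also have "\<dots> = (\<integral>s. (\<integral>x. g x \<partial>lborel) * f s \<partial>lborel)"
    using tri[of g] by simp
  also have "\<dots> = (\<integral>x. g x \<partial>lborel) * (\<integral>x. f x \<partial>lborel)" by simp
  finally show "(\<integral>t. (\<integral>s. g (t - s) * f s \<partial>lborel) \<partial>lborel) = (\<integral>x. g x \<partial>lborel) * (\<integral>x. f x \<partial>lborel)" .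
qed

lemma ai_lborel:
  fixes h :: "real \<Rightarrow> complex"
  assumes hc: "continuous_on {0..} h" and ha: "h absolutely_integrable_on {0..}"
  shows "(\<lambda>s. indicator {0..} s *\<^sub>R h s) \<in> borel_measurable lborel"
    and "integrable lborel (\<lambda>s. indicator {0..} s *\<^sub>R h s)"
    and "(\<integral>s. indicator {0..} s *\<^sub>R h s \<partial>lborel) = integral {0..} h"
proof -
  show m: "(\<lambda>s. indicator {0..} s *\<^sub>R h s) \<in> borel_measurable lborel"
    using borel_measurable_continuous_on_indicator[OF _ hc] by simp
  have il: "integrable lebesgue (\<lambda>s. indicator {0..} s *\<^sub>R h s)"
    using ha by (simp add: set_integrable_def)
  then show i: "integrable lborel (\<lambda>s. indicator {0..} s *\<^sub>R h s)"
    using integrable_completion[OF m] by simp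
  have "integral {0..} h = (LINT x:{0..}|lebesgue. h x)"
    using set_lebesgue_integral_eq_integral(2)[OF ha] by simp
  also have "\<dots> = (\<integral>s. indicator {0..} s *\<^sub>R h s \<partial>lborel)"
    unfolding set_lebesgue_integral_def using integral_completion[OF m] by simp
  finally show "(\<integral>s. indicator {0..} s *\<^sub>R h s \<partial>lborel) = integral {0..} h" by simp
qed

lemma conv_laplace:
  fixes f g :: "real \<Rightarrow> complex"
  assumes fc: "continuous_on {0..} f" and gc: "continuous_on {0..} g"
    and fa: "f absolutely_integrable_on {0..}" and ga: "g absolutely_integrable_on {0..}"
  shows "(\<lambda>t. integral {0..t} (\<lambda>s. g (t - s) * f s)) absolutely_integrable_on {0..}"
    and "integral {0..} (\<lambda>t. integral {0..t} (\<lambda>s. g (t - s) * f s)) = integral {0..} g * integral {0..} f"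
proof -
  define f0 where "f0 = (\<lambda>s. indicator {0..} s *\<^sub>R f s)"
  define g0 where "g0 = (\<lambda>s. indicator {0..} s *\<^sub>R g s)"
  define C where "C = (\<lambda>t. integral {0..t} (\<lambda>s. g (t - s) * f s))"
  note F = ai_lborel[OF fc fa, folded f0_def]
  note G = ai_lborel[OF gc ga, folded g0_def]
  have key: "(\<integral>s. g0 (t - s) * f0 s \<partial>lborel) = indicator {0..} t *\<^sub>R C t" for t
  proof (cases "t \<ge> 0")
    case True
    have eq: "g0 (t - s) * f0 s = indicator {0..t} s *\<^sub>R (g (t - s) * f s)" for s
      by (auto simp: f0_def g0_def indicator_def)
    have cc: "continuous_on {0..t} (\<lambda>s. g (t - s) * f s)"
    proof (intro continuous_intros)
      show "continuous_on {0..t} f" using fc by (rule continuous_on_subset) auto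
      show "continuous_on {0..t} (\<lambda>s. g (t - s))"
        by (rule continuous_on_compose2[OF gc]) (auto intro!: continuous_intros)
    qed
    have "(\<integral>s. g0 (t - s) * f0 s \<partial>lborel) = (LINT s:{0..t}|lborel. g (t - s) * f s)"
      unfolding set_lebesgue_integral_def eq ..
    also have "\<dots> = C t"
      unfolding C_def by (rule set_borel_integral_eq_integral(2)[OF borel_integrable_atLeastAtMost'[OF cc]])
    finally show ?thesis using True by simp
  next
    case False
    then have "(\<lambda>s. g0 (t - s) * f0 s) = (\<lambda>s. 0)" by (auto simp: f0_def g0_def indicator_def)
    then show ?thesis using False by simp
  qed
  note CV = conv_lborel[OF F(1) G(1) F(2) G(2), unfolded key]
  have cm: "(\<lambda>t. indicator {0..} t *\<^sub>R C t) \<in> borel_measurable lborel"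
    using CV(1) by (rule borel_measurable_integrable)
  have "integrable lebesgue (\<lambda>t. indicator {0..} t *\<^sub>R C t)"
    using integrable_completion[OF cm] CV(1) by simp
  then show ca: "C absolutely_integrable_on {0..}" by (simp add: set_integrable_def C_def)
  have "integral {0..} C = (LINT x:{0..}|lebesgue. C x)"
    using set_lebesgue_integral_eq_integral(2)[OF ca] by simp
  also have "\<dots> = (\<integral>t. indicator {0..} t *\<^sub>R C t \<partial>lborel)"
    unfolding set_lebesgue_integral_def using integral_completion[OF cm] by simp
  also have "\<dots> = integral {0..} g * integral {0..} f"
    using CV(2) F(3) G(3) by simp
  finally show "integral {0..} C = integral {0..} g * integral {0..} f" .
qed

lemma ai_sub:
  fixes f :: "real \<Rightarrow> complex"
  assumes "f absolutely_integrable_on {0..}" "0 \<le> a"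
  shows "f absolutely_integrable_on {a..b}"
  by (rule set_integrable_subset[OF assms(1)]) (use assms(2) in auto)

lemma int_tendsto:
  fixes f :: "real \<Rightarrow> complex"
  assumes fa: "f absolutely_integrable_on {0..}"
  shows "((\<lambda>T. integral {0..T} f) \<longlongrightarrow> integral {0..} f) at_top"
proof (rule tendsto_at_topI_sequentially)
  fix X :: "nat \<Rightarrow> real" assume X: "filterlim X at_top sequentially"
  define F where "F n = (\<lambda>x. if x \<in> {0..X n} then f x else 0)" for n
  have eq: "integral {0..X n} f = integral {0..} (F n)" for n
    unfolding F_def integral_restrict_Int by (simp add: Int_absorb2 subset_eq)
  have fi: "f integrable_on {0..X n}" for n
    using set_lebesgue_integral_eq_integral(1)[OF ai_sub[OF fa, of 0 "X n"]] by simp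
  have "(\<lambda>n. integral {0..} (F n)) \<longlonglongrightarrow> integral {0..} f"
  proof (rule dominated_convergence(2)[where h="\<lambda>x. norm (f x)"])
    show "F n integrable_on {0..}" for n
      unfolding F_def integrable_restrict_Int using fi by (simp add: Int_absorb2 subset_eq)
    show "(\<lambda>x. norm (f x)) integrable_on {0..}"
      using fa absolutely_integrable_on_def by blast
    show "norm (F n x) \<le> norm (f x)" if "x \<in> {0..}" for n x
      by (simp add: F_def)
    show "(\<lambda>n. F n x) \<longlonglongrightarrow> f x" if "x \<in> {0..}" for x
    proof (rule tendsto_eventually)
      have "eventually (\<lambda>n. X n \<ge> x) sequentially"
        using X by (simp add: filterlim_at_top)
      then show "eventually (\<lambda>n. F n x = f x) sequentially"
        by eventually_elim (use that in \<open>auto simp: F_def\<close>)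
    qed
  qed
  then show "(\<lambda>n. integral {0..X n} f) \<longlonglongrightarrow> integral {0..} f"
    unfolding eq .
qed

lemma tendsto_zero_if_ai:
  fixes f :: "real \<Rightarrow> complex"
  assumes fa: "f absolutely_integrable_on {0..}" and lim: "(f \<longlongrightarrow> L) at_top"
  shows "L = 0"
proof (rule ccontr)
  assume L: "L \<noteq> 0"
  have "((\<lambda>x. norm (f x)) \<longlongrightarrow> norm L) at_top" using lim by (rule tendsto_norm)
  moreover have "norm L / 2 < norm L" using L by simp
  ultimately have "eventually (\<lambda>x. norm (f x) > norm L / 2) at_top"
    by (rule order_tendstoD)
  then obtain T0 where T0: "\<And>x. x \<ge> T0 \<Longrightarrow> norm (f x) > norm L / 2"
    by (auto simp: eventually_at_top_linorder)
  define a where "a = max T0 0"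
  define B where "B = integral {0..} (\<lambda>x. norm (f x))"
  define b where "b = a + 2 * \<bar>B\<bar> / norm L + 1"
  have ab: "a \<le> b" using L by (simp add: b_def)
  have nfi: "(\<lambda>x. norm (f x)) integrable_on {0..}"
    using fa absolutely_integrable_on_def by blast
  have nfi2: "(\<lambda>x. norm (f x)) integrable_on {a..b}"
    using ai_sub[OF fa, of a b] unfolding absolutely_integrable_on_def a_def by simp
  have "integral {a..b} (\<lambda>x. norm L / 2) \<le> integral {a..b} (\<lambda>x. norm (f x))"
    by (rule integral_le) (use nfi2 T0 in \<open>auto simp: a_def less_imp_le\<close>)
  also have "\<dots> \<le> B" unfolding B_def
    by (rule integral_subset_le) (use nfi2 nfi in \<open>auto simp: a_def\<close>)
  finally have "(b - a) * (norm L / 2) \<le> B" using ab by simp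
  moreover have "(b - a) * (norm L / 2) = \<bar>B\<bar> + norm L / 2"
    using L by (simp add: b_def field_simps)
  moreover have "B \<le> \<bar>B\<bar>" by simp
  moreover have "norm L > 0" using L by simp
  ultimately show False by linarith
qed



lemma scalar_volterra:
  fixes x k :: "real \<Rightarrow> complex" and c :: real and q :: complex
  assumes kc: "continuous_on {0..} k"
  and xd: "\<And>t. t \<ge> 0 \<Longrightarrow> (x has_vector_derivative (- c) *\<^sub>R integral {0..t} (\<lambda>s. k (t - s) * x s)) (at t within {0..})"
  and ka: "(\<lambda>t. exp (- (q * of_real t)) * k t) absolutely_integrable_on {0..}"
  and xa: "(\<lambda>t. exp (- (q * of_real t)) * x t) absolutely_integrable_on {0..}"
  shows "(q + c * laplace k q) * laplace x q = x 0"
proof -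
  define e where "e = (\<lambda>t::real. exp (- (q * of_real t)))"
  define f where "f = (\<lambda>t. e t * x t)"
  define g where "g = (\<lambda>t. e t * k t)"
  define h where "h = (\<lambda>t. integral {0..t} (\<lambda>s. k (t - s) * x s))"
  define C where "C = (\<lambda>t. integral {0..t} (\<lambda>s. g (t - s) * f s))"
  have fa: "f absolutely_integrable_on {0..}" using xa by (simp add: f_def e_def)
  have ga: "g absolutely_integrable_on {0..}" using ka by (simp add: g_def e_def)
  have ec: "continuous_on S e" for S unfolding e_def by (intro continuous_intros)
  have xc: "continuous_on {0..} x"
    unfolding continuous_on_eq_continuous_within
    using has_vector_derivative_continuous[OF xd] by auto
  have fc: "continuous_on {0..} f" unfolding f_def using ec xc by (intro continuous_intros)
  have gc: "continuous_on {0..} g" unfolding g_def using ec kc by (intro continuous_intros)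
  note CV = conv_laplace[OF fc gc fa ga, folded C_def]
  have eh: "e t * h t = C t" for t
  proof -
    have "g (t - s) * f s = e t * (k (t - s) * x s)" for s
    proof -
      have "e (t - s) * e s = e t" unfolding e_def
        by (simp add: exp_add[symmetric] algebra_simps)
      then show ?thesis unfolding f_def g_def by (metis mult.assoc mult.left_commute)
    qed
    then show ?thesis unfolding C_def h_def by simp
  qed
  have ed: "(e has_vector_derivative (- q * e t)) (at t within S)" for t S
  proof -
    have "((\<lambda>z. exp (- (q * z))) has_field_derivative (exp (- (q * of_real t)) * (- q))) (at (of_real t))"
      by (auto intro!: derivative_eq_intros)
    from has_vector_derivative_real_field[OF this, of S] show ?thesis
      by (simp add: e_def mult.commute)
  qed
  have fd: "(f has_vector_derivative (- q * f t - of_real c * C t)) (at t within {0..})" if "t \<ge> 0" for t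
  proof -
    have "(f has_vector_derivative (e t * ((- c) *\<^sub>R h t) + (- q * e t) * x t)) (at t within {0..})"
      unfolding f_def h_def by (rule has_vector_derivative_mult[OF ed xd[OF that]])
    moreover have "e t * ((- c) *\<^sub>R h t) + (- q * e t) * x t = - q * f t - of_real c * C t"
      using eh[of t] by (simp add: f_def scaleR_conv_of_real algebra_simps)
    ultimately show ?thesis by simp
  qed
  have fi: "f integrable_on {0..T}" for T
    using set_lebesgue_integral_eq_integral(1)[OF ai_sub[OF fa, of 0 T]] by simp
  have ci: "C integrable_on {0..T}" for T
    using set_lebesgue_integral_eq_integral(1)[OF ai_sub[OF CV(1), of 0 T]] by simp
  have eq: "f T = x 0 - q * integral {0..T} f - of_real c * integral {0..T} C" if "T \<ge> 0" for T
  proof -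
    have "((\<lambda>t. - q * f t - of_real c * C t) has_integral (f T - f 0)) {0..T}"
    proof (rule fundamental_theorem_of_calculus[OF that])
      fix t assume t: "t \<in> {0..T}"
      show "(f has_vector_derivative (- q * f t - of_real c * C t)) (at t within {0..T})"
        by (rule has_vector_derivative_within_subset[OF fd]) (use t in auto)
    qed
    then have "f T - f 0 = integral {0..T} (\<lambda>t. - q * f t - of_real c * C t)"
      by (simp add: integral_unique)
    also have "\<dots> = - q * integral {0..T} f - of_real c * integral {0..T} C"
    proof -
      have i1: "(\<lambda>t. - q * f t) integrable_on {0..T}" using integrable_on_mult_right[OF fi, of "-q"] .
      have i2: "(\<lambda>t. of_real c * C t) integrable_on {0..T}" using integrable_on_mult_right[OF ci, of "of_real c"] .
      show ?thesis using integral_diff[OF i1 i2] by simp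
    qed
    finally have "f T - f 0 = - q * integral {0..T} f - of_real c * integral {0..T} C" .
    moreover have "f 0 = x 0" by (simp add: f_def e_def)
    ultimately show ?thesis by (simp add: algebra_simps)
  qed
  have "((\<lambda>T. x 0 - q * integral {0..T} f - of_real c * integral {0..T} C) \<longlongrightarrow>
          x 0 - q * integral {0..} f - of_real c * integral {0..} C) at_top"
    by (intro tendsto_intros int_tendsto fa CV(1))
  moreover have "eventually (\<lambda>T. x 0 - q * integral {0..T} f - of_real c * integral {0..T} C = f T) at_top"
    using eq by (auto simp: eventually_at_top_linorder intro!: exI[of _ 0])
  ultimately have "(f \<longlongrightarrow> x 0 - q * integral {0..} f - of_real c * integral {0..} C) at_top"
    by (rule Lim_transform_eventually)
  from tendsto_zero_if_ai[OF fa this] have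
    "x 0 = q * integral {0..} f + of_real c * (integral {0..} g * integral {0..} f)"
    using CV(2) by (simp add: algebra_simps)
  moreover have "laplace k q = integral {0..} g" "laplace x q = integral {0..} f"
    by (simp_all add: laplace_def g_def f_def e_def)
  ultimately show ?thesis by (simp add: algebra_simps)
qed



lemma conj_diag_entry:
  "(U ** diag_mat d ** V) $ i $ j = (\<Sum>a\<in>UNIV. U $ i $ a * d a * V $ a $ j)"
  by (simp add: matrix_matrix_mult_def diag_mat_def if_distrib if_distribR sum_distrib_right
      sum.delta' cong: if_cong)

lemma cscale_conj_diag:
  "cscale z (U ** diag_mat d ** V) = U ** diag_mat (\<lambda>a. z * d a) ** V"
  by (simp add: vec_eq_iff cscale_def conj_diag_entry sum_distrib_left mult_ac)

lemma diag_mult_entry: "(diag_mat d ** Y) $ a $ j = d a * Y $ a $ j"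
proof -
  have "(diag_mat d ** Y) $ a $ j = (\<Sum>k\<in>UNIV. (if a = k then d a else 0) * Y $ k $ j)"
    unfolding matrix_matrix_mult_def diag_mat_def by simp
  also have "\<dots> = (\<Sum>k\<in>UNIV. if k = a then d a * Y $ a $ j else 0)"
    by (rule sum.cong) auto
  finally show ?thesis by simp
qed

lemma mult_cscale: "A ** cscale c B = cscale c (A ** B)"
  by (simp add: vec_eq_iff cscale_def matrix_matrix_mult_def sum_distrib_left mult_ac)

lemma mat_pow_Suc: "mat_pow A (Suc k) = A ** mat_pow A k"
  by (simp add: mat_pow_def)

lemma mat_pow_0: "mat_pow A 0 = mat 1"
  by (simp add: mat_pow_def)

lemma diag_mult_diag: "diag_mat d ** diag_mat e = diag_mat (\<lambda>a. d a * e a)"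
  by (simp add: vec_eq_iff diag_mult_entry) (simp add: diag_mat_def)

lemma mat_pow_conj_diag:
  fixes U V :: "complex^'n^'n"
  assumes VU: "V ** U = mat 1" and UV: "U ** V = mat 1"
  shows "mat_pow (U ** diag_mat d ** V) k = U ** diag_mat (\<lambda>a. d a ^ k) ** V"
proof (induction k)
  case 0
  have "diag_mat (\<lambda>a. d a ^ 0) = (mat 1 :: complex^'n^'n)"
    by (simp add: diag_mat_def mat_def vec_eq_iff)
  then show ?case using UV by (simp add: mat_pow_0)
next
  case (Suc k)
  have "mat_pow (U ** diag_mat d ** V) (Suc k) = U ** diag_mat d ** V ** (U ** diag_mat (\<lambda>a. d a ^ k) ** V)"
    by (simp add: mat_pow_Suc Suc.IH)
  also have "\<dots> = U ** diag_mat d ** (V ** U) ** diag_mat (\<lambda>a. d a ^ k) ** V"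
    by (simp add: matrix_mul_assoc)
  also have "\<dots> = U ** (diag_mat d ** diag_mat (\<lambda>a. d a ^ k)) ** V"
    by (simp add: VU matrix_mul_assoc)
  also have "\<dots> = U ** diag_mat (\<lambda>a. d a ^ Suc k) ** V"
    by (simp add: diag_mult_diag)
  finally show ?case .
qed

lemma mat_exp_conj_diag:
  fixes U V :: "complex^'n^'n"
  assumes VU: "V ** U = mat 1" and UV: "U ** V = mat 1"
  shows "mat_exp (U ** diag_mat d ** V) = U ** diag_mat (\<lambda>a. exp (d a)) ** V"
proof -
  have "(\<lambda>k. (1 / fact k) *\<^sub>R mat_pow (U ** diag_mat d ** V) k) sums (U ** diag_mat (\<lambda>a. exp (d a)) ** V)"
    unfolding sums_def
  proof (rule vec_tendstoI, rule vec_tendstoI)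
    fix i j
    have e: "(\<lambda>n. \<Sum>k<n. d a ^ k /\<^sub>R fact k) \<longlonglongrightarrow> exp (d a)" for a
      using exp_converges[of "d a"] by (simp add: sums_def)
    have "(\<lambda>n. \<Sum>a\<in>UNIV. U $ i $ a * V $ a $ j * (\<Sum>k<n. d a ^ k /\<^sub>R fact k))
        \<longlonglongrightarrow> (\<Sum>a\<in>UNIV. U $ i $ a * V $ a $ j * exp (d a))"
      by (intro tendsto_intros e)
    moreover have "(\<Sum>k<n. (1 / fact k) *\<^sub>R mat_pow (U ** diag_mat d ** V) k) $ i $ j
        = (\<Sum>a\<in>UNIV. U $ i $ a * V $ a $ j * (\<Sum>k<n. d a ^ k /\<^sub>R fact k))" for n
      unfolding mat_pow_conj_diag[OF VU UV]
      apply (simp add: conj_diag_entry sum_distrib_left sum_distrib_right sum.swap[of _ UNIV])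
      apply (simp add: scaleR_conv_of_real divide_inverse mult_ac sum_distrib_left)
      apply (rule sum.swap)
      done
    moreover have "(U ** diag_mat (\<lambda>a. exp (d a)) ** V) $ i $ j = (\<Sum>a\<in>UNIV. U $ i $ a * V $ a $ j * exp (d a))"
      by (simp add: conj_diag_entry mult_ac)
    ultimately show "((\<lambda>n. (\<Sum>k<n. (1 / fact k) *\<^sub>R mat_pow (U ** diag_mat d ** V) k) $ i $ j) \<longlonglongrightarrow>
          (U ** diag_mat (\<lambda>a. exp (d a)) ** V) $ i $ j)" by simp
  qed
  then show ?thesis unfolding mat_exp_def by (rule sums_unique[symmetric])
qed



lemma scale_ai:
  fixes f :: "real \<Rightarrow> complex" and c :: real
  assumes c: "c > 0" and fa: "f absolutely_integrable_on {0..}"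
  shows "(\<lambda>u. f (c * u)) absolutely_integrable_on {0..}"
    and "integral {0..} f = c *\<^sub>R integral {0..} (\<lambda>u. f (c * u))"
proof -
  define F where "F = (\<lambda>x. indicator {0..} x *\<^sub>R f x)"
  have Fi: "integrable lebesgue F" using fa by (simp add: set_integrable_def F_def)
  have eq: "F (0 + c * u) = indicator {0..} u *\<^sub>R f (c * u)" for u
    using c by (auto simp: F_def indicator_def zero_le_mult_iff)
  have "integrable lebesgue (\<lambda>u. F (0 + c * u))"
    by (rule lebesgue_integrable_real_affine[OF Fi]) (use c in simp)
  then show ai: "(\<lambda>u. f (c * u)) absolutely_integrable_on {0..}"
    unfolding eq by (simp add: set_integrable_def)
  have "integral {0..} f = (LINT x:{0..}|lebesgue. f x)"
    using set_lebesgue_integral_eq_integral(2)[OF fa] by simp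
  also have "\<dots> = (\<integral>x. F x \<partial>lebesgue)" by (simp add: set_lebesgue_integral_def F_def)
  also have "\<dots> = \<bar>c\<bar> *\<^sub>R (\<integral>u. F (0 + c * u) \<partial>lebesgue)"
    by (rule lebesgue_integral_real_affine) (use c in simp)
  also have "\<dots> = c *\<^sub>R (LINT u:{0..}|lebesgue. f (c * u))"
    unfolding eq using c by (simp add: set_lebesgue_integral_def)
  also have "\<dots> = c *\<^sub>R integral {0..} (\<lambda>u. f (c * u))"
    using set_lebesgue_integral_eq_integral(2)[OF ai] by simp
  finally show "integral {0..} f = c *\<^sub>R integral {0..} (\<lambda>u. f (c * u))" .
qed

lemma bl_entry: "bounded_linear (\<lambda>M::complex^'n^'n. (A ** M) $ a $ j)"
proof -
  have "linear (\<lambda>M::complex^'n^'n. (A ** M) $ a $ j)"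
    by (rule linearI) (simp_all add: matrix_add_ldistrib matrix_scalar_ac scalar_matrix_assoc[symmetric])
  then show ?thesis by (simp add: linear_conv_bounded_linear)
qed

theorem lemma2:
  fixes G :: "real \<Rightarrow> complex"
    and H0 H2 U :: "complex^'n^'n"
    and lam :: real
    and V W :: "real \<Rightarrow> complex^'n^'n"
    and E :: "'n \<Rightarrow> real"
    and p :: complex
  assumes G_cont: "continuous_on {0..} G"
    and H0_herm: "hermitian_mat H0"
    and H2_herm: "hermitian_mat H2"
    and lam_pos: "lam > 0"
    and V_ode: "\<And>t. t \<ge> 0 \<Longrightarrow>
        (V has_vector_derivative
          (- (lam ^ 2)) *\<^sub>R integral {0..t}
             (\<lambda>s. cscale (G (t - s))
                     (mat_exp (cscale (\<i> * of_real (t - s)) (H0 + (lam ^ 2) *\<^sub>R H2)) ** V s)))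
        (at t within {0..})"
    and V_init: "V 0 = mat 1"
    and W_def: "\<And>t. W t = V (t / lam ^ 2)"
    and U_unitary: "unitary_mat U"
    and diagonalization: "H0 + (lam ^ 2) *\<^sub>R H2 = U ** diag_mat (\<lambda>a. of_real (E a)) ** adjoint_mat U"
    and W_conv: "(\<lambda>t. cscale (exp (- (p * of_real t))) (W t)) absolutely_integrable_on {0..}"
    and G_conv: "\<And>a. (\<lambda>t. exp (- ((- \<i> * of_real (E a) + of_real (lam ^ 2) * p) * of_real t)) * G t)
                        absolutely_integrable_on {0..}"
  shows "(\<forall>a. p + laplace G (- \<i> * of_real (E a) + of_real (lam ^ 2) * p) \<noteq> 0)
       \<and> laplace_mat W p
         = U ** diag_mat (\<lambda>a. 1 / (p + laplace G (- \<i> * of_real (E a) + of_real (lam ^ 2) * p)))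
             ** adjoint_mat U"
proof -
  define H where "H = H0 + (lam ^ 2) *\<^sub>R H2"
  define Ua where "Ua = adjoint_mat U"
  have VU: "Ua ** U = mat 1" and UV: "U ** Ua = mat 1"
    using U_unitary by (simp_all add: unitary_mat_def Ua_def)
  define Dg where "Dg = (\<lambda>\<tau>::real. diag_mat (\<lambda>a. exp (\<i> * of_real \<tau> * of_real (E a))))"
  have expH: "mat_exp (cscale (\<i> * of_real \<tau>) H) = U ** Dg \<tau> ** Ua" for \<tau>
    unfolding H_def diagonalization cscale_conj_diag Dg_def Ua_def[symmetric]
    by (rule mat_exp_conj_diag[OF VU UV])
  define x where "x a j t = (Ua ** V t) $ a $ j" for a j t
  define k where "k a t = G t * exp (\<i> * of_real t * of_real (E a))" for a t
  define q where "q = of_real (lam ^ 2) * p"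
  define z where "z a = - \<i> * of_real (E a) + of_real (lam ^ 2) * p" for a
  have lam2: "lam ^ 2 > 0" using lam_pos by simp
  have Vc: "continuous_on {0..} V"
    unfolding continuous_on_eq_continuous_within
    using has_vector_derivative_continuous[OF V_ode] by auto
  have key: "(p + laplace G (z a)) * (Ua ** laplace_mat W p) $ a $ j = Ua $ a $ j" for a j
  proof -
    note L = bl_entry[of Ua a j]
    have xd: "(x a j has_vector_derivative (- (lam ^ 2)) *\<^sub>R integral {0..t} (\<lambda>s. k a (t - s) * x a j s))
              (at t within {0..})" if t: "t \<ge> 0" for t
    proof -
      define \<Phi> where "\<Phi> = (\<lambda>s. cscale (G (t - s)) (mat_exp (cscale (\<i> * of_real (t - s)) H) ** V s))"
      have Dent: "(U ** Dg \<tau> ** Ua) $ i $ m = (\<Sum>b\<in>UNIV. U $ i $ b * exp (\<i> * of_real \<tau> * of_real (E b)) * Ua $ b $ m)" for i m \<tau>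
        unfolding Dg_def by (rule conj_diag_entry)
      have \<Phi>eq: "\<Phi> s = (\<chi> i j. \<Sum>m\<in>UNIV. \<Sum>b\<in>UNIV. G (t - s) * (U $ i $ b * exp (\<i> * of_real (t - s) * of_real (E b)) * Ua $ b $ m) * V s $ m $ j)" for s
        unfolding \<Phi>_def expH
        by (simp add: vec_eq_iff cscale_def matrix_matrix_mult_def[of "U ** Dg (t - s) ** Ua" "V s"]
            Dent
            sum_distrib_left sum_distrib_right mult_ac)
      have Gc: "continuous_on {0..t} (\<lambda>s. G (t - s))"
        by (rule continuous_on_compose2[OF G_cont]) (auto intro!: continuous_intros)
      have Vc': "continuous_on {0..t} V" using Vc by (rule continuous_on_subset) auto
      have "continuous_on {0..t} \<Phi>"
        unfolding \<Phi>eq by (intro continuous_intros Gc Vc')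
      then have \<Phi>i: "\<Phi> integrable_on {0..t}" by (rule integrable_continuous_interval)
      have ent: "(Ua ** \<Phi> s) $ a $ j = k a (t - s) * x a j s" for s
      proof -
        have "Ua ** \<Phi> s = cscale (G (t - s)) ((Ua ** U) ** Dg (t - s) ** (Ua ** V s))"
          unfolding \<Phi>_def expH mult_cscale by (simp add: matrix_mul_assoc)
        then show ?thesis
          by (simp add: VU cscale_def Dg_def diag_mult_entry k_def x_def mult_ac)
      qed
      have "((\<lambda>s. (Ua ** V s) $ a $ j) has_vector_derivative
              (Ua ** ((- (lam ^ 2)) *\<^sub>R integral {0..t} \<Phi>)) $ a $ j) (at t within {0..})"
        using bounded_linear.has_vector_derivative[OF L V_ode[OF t]] unfolding \<Phi>_def H_def .
      moreover have "(Ua ** ((- (lam ^ 2)) *\<^sub>R integral {0..t} \<Phi>)) $ a $ j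
          = (- (lam ^ 2)) *\<^sub>R integral {0..t} (\<lambda>s. k a (t - s) * x a j s)"
      proof -
        have "(Ua ** ((- (lam ^ 2)) *\<^sub>R integral {0..t} \<Phi>)) $ a $ j
            = (- (lam ^ 2)) *\<^sub>R (Ua ** integral {0..t} \<Phi>) $ a $ j"
          using linear_cmul[OF bounded_linear.linear[OF L]] by blast
        also have "(Ua ** integral {0..t} \<Phi>) $ a $ j = integral {0..t} (\<lambda>s. (Ua ** \<Phi> s) $ a $ j)"
          using integral_linear[OF \<Phi>i L] by (simp add: comp_def)
        finally show ?thesis unfolding ent .
      qed
      ultimately show ?thesis unfolding x_def by simp
    qed
    have kc: "continuous_on {0..} (k a)"
      unfolding k_def by (intro continuous_intros G_cont)
    have ka: "(\<lambda>t. exp (- (q * of_real t)) * k a t) absolutely_integrable_on {0..}"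
    proof -
      have "exp (- (q * of_real t)) * k a t = exp (- (z a * of_real t)) * G t" for t
      proof -
        have "exp (- (q * of_real t)) * exp (\<i> * of_real t * of_real (E a)) = exp (- (z a * of_real t))"
          unfolding exp_add[symmetric] z_def q_def by (simp add: algebra_simps)
        then show ?thesis unfolding k_def by (metis mult.assoc mult.commute)
      qed
      then show ?thesis using G_conv[of a] unfolding z_def by simp
    qed
    have Wa: "(\<lambda>t. exp (- (p * of_real t)) * x a j (t / lam ^ 2)) absolutely_integrable_on {0..}"
    proof -
      have "((\<lambda>M. (Ua ** M) $ a $ j) \<circ> (\<lambda>t. cscale (exp (- (p * of_real t))) (W t))) absolutely_integrable_on {0..}"
        by (rule absolutely_integrable_linear[OF W_conv L])
      moreover have "((\<lambda>M. (Ua ** M) $ a $ j) \<circ> (\<lambda>t. cscale (exp (- (p * of_real t))) (W t)))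
          = (\<lambda>t. exp (- (p * of_real t)) * x a j (t / lam ^ 2))"
        by (simp only: fun_eq_iff comp_def mult_cscale) (simp add: cscale_def x_def W_def)
      ultimately show ?thesis by simp
    qed
    note SC = scale_ai[OF lam2 Wa]
    have xeq: "(\<lambda>u. exp (- (p * of_real (lam ^ 2 * u))) * x a j (lam ^ 2 * u / lam ^ 2))
        = (\<lambda>u. exp (- (q * of_real u)) * x a j u)"
      using lam2 by (simp add: fun_eq_iff q_def mult_ac)
    have xa: "(\<lambda>t. exp (- (q * of_real t)) * x a j t) absolutely_integrable_on {0..}"
      using SC(1) unfolding xeq .
    have S: "(q + lam ^ 2 * laplace (k a) q) * laplace (x a j) q = x a j 0"
      by (rule scalar_volterra[OF kc xd ka xa])
    have lk: "laplace (k a) q = laplace G (z a)"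
    proof -
      have "exp (- (q * of_real t)) * k a t = exp (- (z a * of_real t)) * G t" for t
      proof -
        have "exp (- (q * of_real t)) * exp (\<i> * of_real t * of_real (E a)) = exp (- (z a * of_real t))"
          unfolding exp_add[symmetric] z_def q_def by (simp add: algebra_simps)
        then show ?thesis unfolding k_def by (metis mult.assoc mult.commute)
      qed
      then show ?thesis unfolding laplace_def by simp
    qed
    have x0: "x a j 0 = Ua $ a $ j" by (simp add: x_def V_init)
    have lw: "(Ua ** laplace_mat W p) $ a $ j = of_real (lam ^ 2) * laplace (x a j) q"
    proof -
      have "(Ua ** laplace_mat W p) $ a $ j
          = integral {0..} ((\<lambda>M. (Ua ** M) $ a $ j) \<circ> (\<lambda>t. cscale (exp (- (p * of_real t))) (W t)))"
        unfolding laplace_mat_def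
        by (rule integral_linear[symmetric, OF _ L]) (use W_conv absolutely_integrable_on_def in blast)
      also have "\<dots> = integral {0..} (\<lambda>t. exp (- (p * of_real t)) * x a j (t / lam ^ 2))"
        by (simp only: comp_def mult_cscale) (simp add: cscale_def x_def W_def)
      also have "\<dots> = (lam ^ 2) *\<^sub>R laplace (x a j) q"
        using SC(2) unfolding xeq laplace_def .
      finally show ?thesis by (simp add: scaleR_conv_of_real)
    qed
    have "of_real (lam ^ 2) * ((p + laplace G (z a)) * laplace (x a j) q) = Ua $ a $ j"
      using S unfolding lk x0 by (simp add: q_def algebra_simps)
    then show ?thesis unfolding lw by (simp add: algebra_simps)
  qed
  have nz: "p + laplace G (z a) \<noteq> 0" for a
  proof
    assume 0: "p + laplace G (z a) = 0"
    have "Ua $ a $ j = 0" for j using key[of a j] unfolding 0 by simp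
    then have "(Ua ** U) $ a $ a = 0" by (simp add: matrix_matrix_mult_def)
    then show False using VU by (simp add: mat_def)
  qed
  have "Ua ** laplace_mat W p = diag_mat (\<lambda>a. 1 / (p + laplace G (z a))) ** Ua"
  proof (simp add: vec_eq_iff diag_mult_entry, intro allI)
    fix a j
    show "(Ua ** laplace_mat W p) $ a $ j = Ua $ a $ j / (p + laplace G (z a))"
      using key[of a j] nz[of a] by (simp add: field_simps)
  qed
  then have "laplace_mat W p = U ** diag_mat (\<lambda>a. 1 / (p + laplace G (z a))) ** Ua"
    by (metis UV matrix_mul_assoc matrix_mul_lid)
  then show ?thesis using nz unfolding z_def Ua_def by simp
qed


end
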